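(* For all positive integers $n$ and $k$ with $k\equiv1\pmod 3$, $$\det\big(M_{n+i+j}^{(k)}\big)_{0\le i,j\le k-1}=(-1)^{n\lfloor (k+1)/3\rfloor}\Big(\frac{2k+4}{3}\Big)^{n-1}.$$
   Context: $M_N^{(k)}$ is the number of lattice paths from $(0,0)$ to $(N,0)$ with steps $(1,1)$, $(1,0)$, $(1,-1)$ that never go below the $x$-axis and never go above the line $y=k$ (bounded Motzkin paths). *)

theory Defs
  imports Main "Jordan_Normal_Form.Determinant"
begin

text \<open>A lattice path with steps (1,1),(1,0),(1,-1) starting at (0,0) is encoded by the
list of its vertical increments (each in {-1,0,1}).\<close>

definition bounded_motzkin_paths :: "nat \<Rightarrow> nat \<Rightarrow> int list set" where
  "bounded_motzkin_paths k N =
     {s. length s = N \<and> set s \<subseteq> {-1, 0, 1} \<and> sum_list s = 0 \<and>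
         (\<forall>i \<le> N. 0 \<le> sum_list (take i s) \<and> sum_list (take i s) \<le> int k)}"

definition motzkin_bounded :: "nat \<Rightarrow> nat \<Rightarrow> nat" where
  "motzkin_bounded k N = card (bounded_motzkin_paths k N)"

end

theory Submission
  imports Defs
begin

definition trid :: "nat \<Rightarrow> rat mat" where
  "trid m = mat m m (\<lambda>(i,j). if i = j \<or> i = Suc j \<or> j = Suc i then 1 else 0)"

lemma trid_carrier[simp]: "trid m \<in> carrier_mat m m" and trid_dim[simp]: "dim_row (trid m) = m" "dim_col (trid m) = m"
  by (auto simp: trid_def)

lemma trid_sym: "i < m \<Longrightarrow> j < m \<Longrightarrow> trid m $$ (i,j) = trid m $$ (j,i)"
  by (auto simp: trid_def)

lemma trid_sum:
  assumes "i < m"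
  shows "(\<Sum>c<m. trid m $$ (i,c) * f c) =
     (if 0 < i then f (i - 1) else 0) + f i + (if Suc i < m then f (Suc i) else 0)"
proof -
  have "(\<Sum>c<m. trid m $$ (i,c) * f c) =
     (\<Sum>c<m. (if 0 < i \<and> c = i - 1 then f c else 0) + (if c = i then f c else 0) + (if c = Suc i then f c else 0))"
    using assms by (intro sum.cong) (auto simp: trid_def)
  also have "\<dots> = (if 0 < i then f (i - 1) else 0) + f i + (if Suc i < m then f (Suc i) else 0)"
  proof -
    have "(\<Sum>c<m. (if 0 < i \<and> c = i - 1 then f c else 0)) = (if 0 < i then f (i - 1) else 0)"
      using assms by (cases "0 < i") (auto simp: sum.delta')
    moreover have "(\<Sum>c<m. (if c = Suc i then f c else 0)) = (if Suc i < m then f (Suc i) else 0)"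
      by (simp add: sum.delta')
    moreover have "(\<Sum>c<m. (if c = i then f c else 0)) = f i"
      using assms by (simp add: sum.delta')
    ultimately show ?thesis by (simp add: sum.distrib)
  qed
  finally show ?thesis .
qed

lemma pow_mat_Suc':
  assumes "A \<in> carrier_mat n n"
  shows "A ^\<^sub>m Suc k = A * A ^\<^sub>m k"
proof (induction k)
  case 0 then show ?case using assms by simp
next
  case (Suc k)
  have "A ^\<^sub>m Suc (Suc k) = (A * A ^\<^sub>m k) * A" using Suc by simp
  also have "\<dots> = A * (A ^\<^sub>m k * A)" using assms by (simp add: assoc_mult_mat[of _ n n _ n _ n])
  finally show ?case by simp
qed

lemma pow_mat_add:
  assumes "A \<in> carrier_mat n n"
  shows "A ^\<^sub>m (a + b) = A ^\<^sub>m a * A ^\<^sub>m b"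
proof (induction b)
  case 0 then show ?case using assms by simp
next
  case (Suc b)
  have "A ^\<^sub>m (a + Suc b) = (A ^\<^sub>m a * A ^\<^sub>m b) * A" using Suc by simp
  also have "\<dots> = A ^\<^sub>m a * (A ^\<^sub>m b * A)" using assms by (simp add: assoc_mult_mat[of _ n n _ n _ n])
  finally show ?case by simp
qed

fun vpath :: "nat \<Rightarrow> int \<Rightarrow> int list \<Rightarrow> bool" where
  "vpath k h [] = True"
| "vpath k h (d # s) = (d \<in> {-1,0,1} \<and> 0 \<le> h + d \<and> h + d \<le> int k \<and> vpath k (h + d) s)"

lemma vpath_iff:
  assumes "0 \<le> h" "h \<le> int k"
  shows "vpath k h s \<longleftrightarrow> set s \<subseteq> {-1,0,1} \<and>
     (\<forall>i \<le> length s. 0 \<le> h + sum_list (take i s) \<and> h + sum_list (take i s) \<le> int k)"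
  using assms
proof (induction s arbitrary: h)
  case Nil then show ?case by simp
next
  case (Cons d s)
  have split: "(\<forall>i \<le> Suc n. P i) \<longleftrightarrow> P 0 \<and> (\<forall>j \<le> n. P (Suc j))" for P :: "nat \<Rightarrow> bool" and n
    by (metis Suc_le_mono le0 not0_implies_Suc)
  show ?case
  proof
    assume v: "vpath k h (d # s)"
    then have h: "0 \<le> h + d" "h + d \<le> int k" and vs: "vpath k (h + d) s" and d: "d \<in> {-1,0,1}" by auto
    from Cons.IH[OF h] vs have "set s \<subseteq> {-1,0,1} \<and>
     (\<forall>i \<le> length s. 0 \<le> h + d + sum_list (take i s) \<and> h + d + sum_list (take i s) \<le> int k)" by simp
    then show "set (d # s) \<subseteq> {-1,0,1} \<and>
     (\<forall>i \<le> length (d # s). 0 \<le> h + sum_list (take i (d # s)) \<and> h + sum_list (take i (d # s)) \<le> int k)"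
      using d Cons.prems by (simp add: split add.assoc)
  next
    assume r: "set (d # s) \<subseteq> {-1,0,1} \<and>
     (\<forall>i \<le> length (d # s). 0 \<le> h + sum_list (take i (d # s)) \<and> h + sum_list (take i (d # s)) \<le> int k)"
    then have d: "d \<in> {-1,0,1}" and ss: "set s \<subseteq> {-1,0,1}"
      and all: "\<forall>j \<le> length s. 0 \<le> h + d + sum_list (take j s) \<and> h + d + sum_list (take j s) \<le> int k"
      by (auto simp: split add.assoc)
    from all have h: "0 \<le> h + d" "h + d \<le> int k" by (auto dest: spec[of _ 0])
    from Cons.IH[OF h] ss all have "vpath k (h + d) s" by simp
    with d h show "vpath k h (d # s)" by simp
  qed
qed

lemma vpath_set: "vpath k h s \<Longrightarrow> set s \<subseteq> {-1,0,1}"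
  by (induction s arbitrary: h) auto

definition PS :: "nat \<Rightarrow> nat \<Rightarrow> int \<Rightarrow> int \<Rightarrow> int list set" where
  "PS k N h b = {s. length s = N \<and> vpath k h s \<and> h + sum_list s = b}"

lemma PS_finite: "finite (PS k N h b)"
proof -
  have "PS k N h b \<subseteq> {s. set s \<subseteq> {-1,0,1} \<and> length s = N}"
    by (auto simp: PS_def dest: vpath_set)
  moreover have "finite {s. set s \<subseteq> ({-1,0,1}::int set) \<and> length s = N}"
    by (rule finite_lists_length_eq) simp
  ultimately show ?thesis by (rule finite_subset)
qed

lemma PS_Suc:
  "PS k (Suc N) h b = (\<Union>d\<in>{d\<in>{-1,0,1}. 0 \<le> h + d \<and> h + d \<le> int k}. (#) d ` PS k N (h + d) b)"
proof (intro equalityI subsetI)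
  fix s assume "s \<in> PS k (Suc N) h b"
  then obtain d s' where s: "s = d # s'" and l: "length s' = N" and v: "vpath k h (d # s')"
    and e: "h + sum_list (d # s') = b"
    by (auto simp: PS_def length_Suc_conv)
  from v have "d \<in> {-1,0,1}" "0 \<le> h + d" "h + d \<le> int k" "vpath k (h + d) s'" by auto
  moreover have "s' \<in> PS k N (h + d) b" using l e \<open>vpath k (h + d) s'\<close> by (simp add: PS_def add.assoc)
  ultimately show "s \<in> (\<Union>d\<in>{d\<in>{-1,0,1}. 0 \<le> h + d \<and> h + d \<le> int k}. (#) d ` PS k N (h + d) b)"
    using s by blast
next
  fix s assume "s \<in> (\<Union>d\<in>{d\<in>{-1,0,1}. 0 \<le> h + d \<and> h + d \<le> int k}. (#) d ` PS k N (h + d) b)"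
  then obtain d s' where d: "d \<in> {-1,0,1}" "0 \<le> h + d" "h + d \<le> int k" and s: "s = d # s'"
    and s': "s' \<in> PS k N (h + d) b" by blast
  then show "s \<in> PS k (Suc N) h b" by (auto simp: PS_def add.assoc)
qed

lemma card_PS_Suc:
  "card (PS k (Suc N) h b) = (\<Sum>d\<in>{d\<in>{-1,0,1}. 0 \<le> h + d \<and> h + d \<le> int k}. card (PS k N (h + d) b))"
  unfolding PS_Suc
  by (subst card_UN_disjoint) (auto simp: PS_finite card_image)

lemma mult_entry:
  assumes "A \<in> carrier_mat n p" "B \<in> carrier_mat p q" "i < n" "j < q"
  shows "(A * B) $$ (i,j) = (\<Sum>c<p. A $$ (i,c) * B $$ (c,j))"
  using assms by (simp add: scalar_prod_def atLeast0LessThan)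

lemma PS_0: "PS k 0 h b = (if h = b then {[]} else {})"
  by (auto simp: PS_def)

lemma count_pow:
  assumes "a < Suc k" "b < Suc k"
  shows "of_nat (card (PS k N (int a) (int b))) = (trid (Suc k) ^\<^sub>m N) $$ (a,b)"
  using assms(1)
proof (induction N arbitrary: a)
  case 0 then show ?case using assms by (simp add: PS_0)
next
  case (Suc N)
  let ?A = "trid (Suc k)"
  let ?g = "\<lambda>d. card (PS k N (int a + d) (int b))"
  have "card (PS k (Suc N) (int a) (int b)) = (\<Sum>d\<in>{-1,0,1}. if 0 \<le> int a + d \<and> int a + d \<le> int k then ?g d else 0)"
    unfolding card_PS_Suc by (rule sum.inter_filter) simp
  also have "\<dots> = (if 0 < a then card (PS k N (int (a - 1)) (int b)) else 0) + card (PS k N (int a) (int b))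
      + (if Suc a < Suc k then card (PS k N (int (Suc a)) (int b)) else 0)"
    using Suc.prems by (simp add: of_nat_diff add.commute)
  finally have c: "of_nat (card (PS k (Suc N) (int a) (int b))) = 
      (if 0 < a then of_nat (card (PS k N (int (a - 1)) (int b))) else 0) + of_nat (card (PS k N (int a) (int b)))
      + (if Suc a < Suc k then of_nat (card (PS k N (int (Suc a)) (int b))) else (0::rat))"
    by simp
  have "(?A ^\<^sub>m Suc N) $$ (a,b) = (?A * ?A ^\<^sub>m N) $$ (a,b)"
    using pow_mat_Suc'[OF trid_carrier, of "Suc k" N] by simp
  also have "\<dots> = (\<Sum>c<Suc k. ?A $$ (a,c) * (?A ^\<^sub>m N) $$ (c,b))"
    using Suc.prems assms by (intro mult_entry) auto
  also have "\<dots> = (if 0 < a then (?A ^\<^sub>m N) $$ (a - 1,b) else 0) + (?A ^\<^sub>m N) $$ (a,b)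
      + (if Suc a < Suc k then (?A ^\<^sub>m N) $$ (Suc a,b) else 0)"
    using Suc.prems by (rule trid_sum)
  finally have r: "(?A ^\<^sub>m Suc N) $$ (a,b) = (if 0 < a then (?A ^\<^sub>m N) $$ (a - 1,b) else 0) + (?A ^\<^sub>m N) $$ (a,b)
      + (if Suc a < Suc k then (?A ^\<^sub>m N) $$ (Suc a,b) else 0)" .
  have i1: "0 < a \<Longrightarrow> of_nat (card (PS k N (int (a - 1)) (int b))) = (?A ^\<^sub>m N) $$ (a - 1,b)"
    using Suc.IH[of "a - 1"] Suc.prems by simp
  have i2: "Suc a < Suc k \<Longrightarrow> of_nat (card (PS k N (int (Suc a)) (int b))) = (?A ^\<^sub>m N) $$ (Suc a,b)"
    using Suc.IH[of "Suc a"] by blast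
  have i0: "of_nat (card (PS k N (int a) (int b))) = (?A ^\<^sub>m N) $$ (a,b)"
    using Suc.IH Suc.prems by blast
  show ?case unfolding c r using i0 i1 i2 by presburger
qed

lemma motzkin_PS: "bounded_motzkin_paths k N = PS k N 0 0"
proof -
  have "vpath k 0 s \<longleftrightarrow> set s \<subseteq> {-1,0,1} \<and>
     (\<forall>i \<le> length s. 0 \<le> sum_list (take i s) \<and> sum_list (take i s) \<le> int k)" for s
    using vpath_iff[of 0 k s] by simp
  then show ?thesis unfolding bounded_motzkin_paths_def PS_def by auto
qed

lemma motzkin_pow: "of_nat (motzkin_bounded k N) = (trid (Suc k) ^\<^sub>m N) $$ (0,0)"
  using count_pow[of 0 k 0 N] unfolding motzkin_bounded_def motzkin_PS by simp

lemma col0: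
  assumes "j \<le> b" "b < Suc k"
  shows "(trid (Suc k) ^\<^sub>m j) $$ (b,0) = (if b = j then 1 else 0)"
  using assms
proof (induction j arbitrary: b)
  case 0 then show ?case by simp
next
  case (Suc j)
  let ?A = "trid (Suc k)"
  have "(?A ^\<^sub>m Suc j) $$ (b,0) = (?A * ?A ^\<^sub>m j) $$ (b,0)"
    using pow_mat_Suc'[OF trid_carrier, of "Suc k" j] by simp
  also have "\<dots> = (\<Sum>c<Suc k. ?A $$ (b,c) * (?A ^\<^sub>m j) $$ (c,0))"
    using Suc.prems by (intro mult_entry) auto
  also have "\<dots> = (if 0 < b then (?A ^\<^sub>m j) $$ (b - 1,0) else 0) + (?A ^\<^sub>m j) $$ (b,0)
      + (if Suc b < Suc k then (?A ^\<^sub>m j) $$ (Suc b,0) else 0)"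
    using Suc.prems by (intro trid_sum) auto
  also have "\<dots> = (if b = Suc j then 1 else 0)"
    using Suc.IH[of "b - 1"] Suc.IH[of b] Suc.IH[of "Suc b"] Suc.prems by auto
  finally show ?case .
qed

lemma row0:
  assumes "j \<le> b" "b < Suc k"
  shows "(trid (Suc k) ^\<^sub>m j) $$ (0,b) = (if b = j then 1 else 0)"
  using assms
proof (induction j arbitrary: b)
  case 0 then show ?case by simp
next
  case (Suc j)
  let ?A = "trid (Suc k)"
  have "(?A ^\<^sub>m Suc j) $$ (0,b) = (?A ^\<^sub>m j * ?A) $$ (0,b)"
    by simp
  also have "\<dots> = (\<Sum>c<Suc k. (?A ^\<^sub>m j) $$ (0,c) * ?A $$ (c,b))"
    using Suc.prems by (intro mult_entry) auto
  also have "\<dots> = (\<Sum>c<Suc k. ?A $$ (b,c) * (?A ^\<^sub>m j) $$ (0,c))"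
    using Suc.prems by (intro sum.cong) (auto simp: trid_sym)
  also have "\<dots> = (if 0 < b then (?A ^\<^sub>m j) $$ (0,b - 1) else 0) + (?A ^\<^sub>m j) $$ (0,b)
      + (if Suc b < Suc k then (?A ^\<^sub>m j) $$ (0,Suc b) else 0)"
    using Suc.prems by (intro trid_sum) auto
  also have "\<dots> = (if b = Suc j then 1 else 0)"
    using Suc.IH[of "b - 1"] Suc.IH[of b] Suc.IH[of "Suc b"] Suc.prems by auto
  finally show ?case .
qed

definition Lm :: "nat \<Rightarrow> nat \<Rightarrow> rat mat" where
  "Lm k n = mat k k (\<lambda>(i,j). (trid (Suc k) ^\<^sub>m n) $$ (i,j))"
definition Sm :: "nat \<Rightarrow> rat mat" where
  "Sm k = mat k k (\<lambda>(i,a). (trid (Suc k) ^\<^sub>m i) $$ (0,a))"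
definition Tm :: "nat \<Rightarrow> rat mat" where
  "Tm k = mat k k (\<lambda>(b,j). (trid (Suc k) ^\<^sub>m j) $$ (b,0))"

lemma Lm_carrier[simp]: "Lm k n \<in> carrier_mat k k" and Sm_carrier[simp]: "Sm k \<in> carrier_mat k k"
  and Tm_carrier[simp]: "Tm k \<in> carrier_mat k k"
  by (auto simp: Lm_def Sm_def Tm_def)

lemma dims[simp]: "dim_row (Lm k n) = k" "dim_col (Lm k n) = k" "dim_row (Sm k) = k" "dim_col (Sm k) = k"
   "dim_row (Tm k) = k" "dim_col (Tm k) = k"
  by (auto simp: Lm_def Sm_def Tm_def)

lemma hankel_eq:
  "mat k k (\<lambda>(i, j). of_nat (motzkin_bounded k (n + i + j)) :: rat) = Sm k * (Lm k n * Tm k)"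
proof (rule eq_matI)
  fix i j assume ij: "i < dim_row (Sm k * (Lm k n * Tm k))" "j < dim_col (Sm k * (Lm k n * Tm k))"
  then have i: "i < k" and j: "j < k" by auto
  let ?A = "trid (Suc k)"
  have AC: "?A \<in> carrier_mat (Suc k) (Suc k)" by simp
  have "of_nat (motzkin_bounded k (n + i + j)) = (?A ^\<^sub>m (i + (n + j))) $$ (0,0)"
    by (simp add: motzkin_pow add_ac)
  also have "\<dots> = (?A ^\<^sub>m i * (?A ^\<^sub>m n * ?A ^\<^sub>m j)) $$ (0,0)"
    by (simp add: pow_mat_add[OF AC])
  also have "\<dots> = (\<Sum>a<Suc k. (?A ^\<^sub>m i) $$ (0,a) * (?A ^\<^sub>m n * ?A ^\<^sub>m j) $$ (a,0))"
    by (rule mult_entry[of _ "Suc k" "Suc k" _ "Suc k"]) auto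
  also have "\<dots> = (\<Sum>a<Suc k. (?A ^\<^sub>m i) $$ (0,a) * (\<Sum>b<Suc k. (?A ^\<^sub>m n) $$ (a,b) * (?A ^\<^sub>m j) $$ (b,0)))"
    by (intro sum.cong refl arg_cong2[where f = "(*)"] mult_entry) auto
  also have "\<dots> = (\<Sum>a<k. (?A ^\<^sub>m i) $$ (0,a) * (\<Sum>b<k. (?A ^\<^sub>m n) $$ (a,b) * (?A ^\<^sub>m j) $$ (b,0)))"
  proof -
    have z1: "(?A ^\<^sub>m i) $$ (0,k) = 0" using row0[of i k k] i by simp
    have z2: "(?A ^\<^sub>m j) $$ (k,0) = 0" using col0[of j k k] j by simp
    show ?thesis by (simp add: z1 z2)
  qed
  also have "\<dots> = (Sm k * (Lm k n * Tm k)) $$ (i,j)"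
  proof -
    have "(Sm k * (Lm k n * Tm k)) $$ (i,j) = (\<Sum>a<k. Sm k $$ (i,a) * (Lm k n * Tm k) $$ (a,j))"
      using i j by (intro mult_entry) auto
    also have "\<dots> = (\<Sum>a<k. Sm k $$ (i,a) * (\<Sum>b<k. Lm k n $$ (a,b) * Tm k $$ (b,j)))"
      using j by (intro sum.cong refl arg_cong2[where f = "(*)"] mult_entry) auto
    finally show ?thesis using i j by (simp add: Sm_def Lm_def Tm_def)
  qed
  finally show "mat k k (\<lambda>(i, j). of_nat (motzkin_bounded k (n + i + j)) :: rat) $$ (i,j) = (Sm k * (Lm k n * Tm k)) $$ (i,j)"
    using i j by simp
qed (auto)

lemma det_Sm: "det (Sm k) = 1"
proof -
  have "det (Sm k) = prod_list (diag_mat (Sm k))"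
    by (rule det_lower_triangular[of k]) (auto simp: Sm_def row0)
  also have "\<dots> = 1" by (simp add: prod_list_diag_prod Sm_def row0)
  finally show ?thesis .
qed

lemma det_Tm: "det (Tm k) = 1"
proof -
  have "det (Tm k) = prod_list (diag_mat (Tm k))"
    by (rule det_upper_triangular[of _ k]) (auto simp: Tm_def col0 upper_triangular_def)
  also have "\<dots> = 1" by (simp add: prod_list_diag_prod Tm_def col0)
  finally show ?thesis .
qed

lemma det_hankel:
  "det (mat k k (\<lambda>(i, j). of_nat (motzkin_bounded k (n + i + j)) :: rat)) = det (Lm k n)"
proof -
  have "det (Sm k * (Lm k n * Tm k)) = det (Sm k) * det (Lm k n * Tm k)"
    by (rule det_mult[of _ k]) auto
  also have "det (Lm k n * Tm k) = det (Lm k n) * det (Tm k)"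
    by (rule det_mult[of _ k]) auto
  finally show ?thesis unfolding hankel_eq by (simp add: det_Sm det_Tm)
qed

definition zz :: "nat \<Rightarrow> rat" where
  "zz i = (if i mod 3 = 0 then -1 else if i mod 3 = 1 then 1 else 0)"

lemma zz_trid:
  assumes "i < Suc k" "k mod 3 = 1"
  shows "(if 0 < i then zz (i - 1) else 0) + zz i + (if Suc i < Suc k then zz (Suc i) else 0) = 0"
proof (cases "i = 0")
  case True then show ?thesis using assms by (auto simp: zz_def)
next
  case False
  then obtain i' where i': "i = Suc i'" by (cases i) auto
  show ?thesis
  proof (cases "Suc i < Suc k")
    case True
    have "i' mod 3 = 0 \<or> i' mod 3 = 1 \<or> i' mod 3 = 2" by auto
    then show ?thesis using True unfolding i' by (auto simp: zz_def mod_Suc)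
  next
    case False
    then have "i = k" using assms by auto
    then have "i' mod 3 = 0" using assms i' by presburger
    then show ?thesis using False i' by (auto simp: zz_def mod_Suc)
  qed
qed

lemma zz_trid2:
  assumes "i < k" "k mod 3 = 1"
  shows "(if 0 < i then zz (i - 1) else 0) + zz i + (if Suc i < k then zz (Suc i) else 0) = (if i = k - 1 then -1 else 0)"
proof (cases "Suc i < k")
  case True
  then have "(if 0 < i then zz (i - 1) else 0) + zz i + (if Suc i < k then zz (Suc i) else 0)
    = (if 0 < i then zz (i - 1) else 0) + zz i + (if Suc i < Suc k then zz (Suc i) else 0)" by simp
  also have "\<dots> = 0" using assms by (intro zz_trid) auto
  finally show ?thesis using True by auto
next
  case False
  then have ik: "i = k - 1" using assms by auto
  then have "i mod 3 = 0" using assms by (cases k) (auto simp: mod_Suc split: if_splits)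
  moreover have "0 < i \<Longrightarrow> (i - 1) mod 3 = 2" using \<open>i mod 3 = 0\<close> by (cases i) (auto simp: mod_Suc split: if_splits)
  ultimately show ?thesis using False ik by (auto simp: zz_def)
qed

lemma A_zz:
  assumes "k mod 3 = 1" "i < Suc k"
  shows "(\<Sum>c<Suc k. (trid (Suc k) ^\<^sub>m Suc n) $$ (i,c) * zz c) = 0"
proof -
  let ?A = "trid (Suc k)"
  let ?z = "vec (Suc k) zz"
  have Az: "?A *\<^sub>v ?z = 0\<^sub>v (Suc k)"
  proof (rule eq_vecI)
    fix j assume "j < dim_vec (0\<^sub>v (Suc k) :: rat vec)"
    then have j: "j < Suc k" by simp
    have "(?A *\<^sub>v ?z) $ j = (\<Sum>c<Suc k. ?A $$ (j,c) * zz c)"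
      using j by (simp add: scalar_prod_def atLeast0LessThan)
    also have "\<dots> = 0" using trid_sum[OF j, of zz] zz_trid[OF j assms(1)] by simp
    finally show "(?A *\<^sub>v ?z) $ j = 0\<^sub>v (Suc k) $ j" using j by simp
  qed simp
  have "(?A ^\<^sub>m Suc n) *\<^sub>v ?z = (?A ^\<^sub>m n * ?A) *\<^sub>v ?z" by simp
  also have "\<dots> = ?A ^\<^sub>m n *\<^sub>v (?A *\<^sub>v ?z)"
    by (rule assoc_mult_mat_vec[of _ "Suc k" "Suc k" _ "Suc k"]) auto
  also have "\<dots> = 0\<^sub>v (Suc k)" unfolding Az by (intro eq_vecI) auto
  finally have "((?A ^\<^sub>m Suc n) *\<^sub>v ?z) $ i = 0" using assms by simp
  then show ?thesis using assms by (simp add: scalar_prod_def atLeast0LessThan)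
qed

definition Xm :: "nat \<Rightarrow> rat mat" where
  "Xm k = mat k k (\<lambda>(i,j). trid k $$ (i,j) - (if j = k - 1 then zz i else 0))"

lemma Xm_carrier[simp]: "Xm k \<in> carrier_mat k k" by (simp add: Xm_def)
lemma Xm_dim[simp]: "dim_row (Xm k) = k" "dim_col (Xm k) = k" by (simp_all add: Xm_def)

lemma trid_Suc_entry: "c < k \<Longrightarrow> j < k \<Longrightarrow> trid (Suc k) $$ (c,j) = trid k $$ (c,j)"
  by (simp add: trid_def)

lemma L_step:
  assumes "k mod 3 = 1"
  shows "Lm k (Suc (Suc n)) = Lm k (Suc n) * Xm k"
proof (rule eq_matI)
  fix i j assume "i < dim_row (Lm k (Suc n) * Xm k)" "j < dim_col (Lm k (Suc n) * Xm k)"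
  then have i: "i < k" and j: "j < k" by auto
  let ?A = "trid (Suc k)"
  let ?P = "?A ^\<^sub>m Suc n"
  have zk: "zz k = 1" using assms by (simp add: zz_def)
  have kcol: "?P $$ (i,k) = - (\<Sum>c<k. ?P $$ (i,c) * zz c)"
    using A_zz[OF assms, of i n] i zk by simp
  have Akj: "?A $$ (k,j) = (if j = k - 1 then 1 else 0)" using j by (auto simp: trid_def)
  have "Lm k (Suc (Suc n)) $$ (i,j) = (?P * ?A) $$ (i,j)" using i j by (simp add: Lm_def)
  also have "\<dots> = (\<Sum>c<Suc k. ?P $$ (i,c) * ?A $$ (c,j))"
    using i j by (intro mult_entry[of _ "Suc k" "Suc k" _ "Suc k"]) auto
  also have "\<dots> = (\<Sum>c<k. ?P $$ (i,c) * trid k $$ (c,j)) + ?P $$ (i,k) * ?A $$ (k,j)"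
    using j by (simp add: trid_Suc_entry)
  also have "\<dots> = (\<Sum>c<k. ?P $$ (i,c) * trid k $$ (c,j)) - (if j = k - 1 then (\<Sum>c<k. ?P $$ (i,c) * zz c) else 0)"
    unfolding kcol Akj by simp
  also have "\<dots> = (\<Sum>c<k. Lm k (Suc n) $$ (i,c) * Xm k $$ (c,j))"
    using i j by (simp add: Lm_def Xm_def right_diff_distrib sum_subtractf)
  also have "\<dots> = (Lm k (Suc n) * Xm k) $$ (i,j)"
    using i j by (intro mult_entry[symmetric]) auto
  finally show "Lm k (Suc (Suc n)) $$ (i,j) = (Lm k (Suc n) * Xm k) $$ (i,j)" .
qed auto

lemma L_one: "Lm k 1 = trid k"
  by (rule eq_matI) (auto simp: Lm_def trid_Suc_entry)

lemma det_L:
  assumes "k mod 3 = 1"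
  shows "det (Lm k (Suc n)) = det (trid k) * det (Xm k) ^ n"
proof (induction n)
  case 0 then show ?case using L_one by simp
next
  case (Suc n)
  have "det (Lm k (Suc (Suc n))) = det (Lm k (Suc n)) * det (Xm k)"
    unfolding L_step[OF assms] by (rule det_mult[of _ k]) auto
  then show ?case using Suc by simp
qed

lemma det_rank_one:
  fixes W :: "rat mat"
  assumes W: "W \<in> carrier_mat k 1"
  shows "det (1\<^sub>m k + W * W\<^sup>T) = 1 + (\<Sum>i<k. W $$ (i,0) * W $$ (i,0))"
proof -
  have WT: "W\<^sup>T \<in> carrier_mat 1 k" using W by simp
  define M where "M = four_block_mat (1\<^sub>m 1) (- W\<^sup>T) W (1\<^sub>m k)"
  define P where "P = four_block_mat (1\<^sub>m 1) (W\<^sup>T) (0\<^sub>m k 1) (1\<^sub>m k)"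
  have MC: "M \<in> carrier_mat (1 + k) (1 + k)" unfolding M_def using W WT by (intro four_block_carrier_mat) auto
  have PC: "P \<in> carrier_mat (1 + k) (1 + k)" unfolding P_def using W WT by (intro four_block_carrier_mat) auto
  have detP: "det P = 1" unfolding P_def
    by (subst det_four_block_mat_lower_left_zero[of _ 1 _ k]) (use WT in auto)
  have MP: "M * P = four_block_mat (1\<^sub>m 1) (0\<^sub>m 1 k) W (1\<^sub>m k + W * W\<^sup>T)"
  proof -
    have "M * P = four_block_mat (1\<^sub>m 1 * 1\<^sub>m 1 + (- W\<^sup>T) * 0\<^sub>m k 1) (1\<^sub>m 1 * W\<^sup>T + (- W\<^sup>T) * 1\<^sub>m k)
        (W * 1\<^sub>m 1 + 1\<^sub>m k * 0\<^sub>m k 1) (W * W\<^sup>T + 1\<^sub>m k * 1\<^sub>m k)"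
      unfolding M_def P_def by (rule mult_four_block_mat) (use W WT in auto)
    also have "\<dots> = four_block_mat (1\<^sub>m 1) (0\<^sub>m 1 k) W (1\<^sub>m k + W * W\<^sup>T)"
    proof -
      have e1: "1\<^sub>m 1 * 1\<^sub>m 1 + (- W\<^sup>T) * 0\<^sub>m k 1 = (1\<^sub>m 1 :: rat mat)"
        by (rule eq_matI) (use WT in auto)
      have e2: "1\<^sub>m 1 * W\<^sup>T + (- W\<^sup>T) * 1\<^sub>m k = 0\<^sub>m 1 k"
        by (rule eq_matI) (use WT in auto)
      have e3: "W * 1\<^sub>m 1 + 1\<^sub>m k * 0\<^sub>m k 1 = W"
        by (rule eq_matI) (use W in auto)
      have e4: "W * W\<^sup>T + 1\<^sub>m k * 1\<^sub>m k = 1\<^sub>m k + W * W\<^sup>T"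
        by (rule eq_matI) (use W in auto)
      show ?thesis unfolding e1 e2 e3 e4 ..
    qed
    finally show ?thesis .
  qed
  have "det (M * P) = det (1\<^sub>m k + W * W\<^sup>T)"
    unfolding MP by (subst det_four_block_mat_upper_right_zero[of _ 1 _ k]) (use W in auto)
  then have d1: "det M = det (1\<^sub>m k + W * W\<^sup>T)"
    using det_mult[OF MC PC] detP by simp
  have PM: "P * M = four_block_mat (1\<^sub>m 1 + W\<^sup>T * W) (0\<^sub>m 1 k) W (1\<^sub>m k)"
  proof -
    have "P * M = four_block_mat (1\<^sub>m 1 * 1\<^sub>m 1 + W\<^sup>T * W) (1\<^sub>m 1 * (- W\<^sup>T) + W\<^sup>T * 1\<^sub>m k)
        (0\<^sub>m k 1 * 1\<^sub>m 1 + 1\<^sub>m k * W) (0\<^sub>m k 1 * (- W\<^sup>T) + 1\<^sub>m k * 1\<^sub>m k)"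
      unfolding M_def P_def by (rule mult_four_block_mat) (use W WT in auto)
    also have "\<dots> = four_block_mat (1\<^sub>m 1 + W\<^sup>T * W) (0\<^sub>m 1 k) W (1\<^sub>m k)"
    proof -
      have e1: "1\<^sub>m 1 * 1\<^sub>m 1 + W\<^sup>T * W = 1\<^sub>m 1 + W\<^sup>T * W"
        by (rule eq_matI) (use W in auto)
      have e2: "1\<^sub>m 1 * (- W\<^sup>T) + W\<^sup>T * 1\<^sub>m k = 0\<^sub>m 1 k"
        by (rule eq_matI) (use WT in auto)
      have e3: "0\<^sub>m k 1 * 1\<^sub>m 1 + 1\<^sub>m k * W = W"
        by (rule eq_matI) (use W in auto)
      have e4: "0\<^sub>m k 1 * (- W\<^sup>T) + 1\<^sub>m k * 1\<^sub>m k = (1\<^sub>m k :: rat mat)"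
        by (rule eq_matI) (use W in auto)
      show ?thesis unfolding e1 e2 e3 e4 ..
    qed
    finally show ?thesis .
  qed
  have "det (P * M) = det (1\<^sub>m 1 + W\<^sup>T * W)"
    unfolding PM by (subst det_four_block_mat_upper_right_zero[of _ 1 _ k]) (use W in auto)
  also have "\<dots> = (1\<^sub>m 1 + W\<^sup>T * W) $$ (0,0)" by (rule det_single) (use W in auto)
  also have "\<dots> = 1 + (\<Sum>i<k. W $$ (i,0) * W $$ (i,0))"
    using W by (simp add: scalar_prod_def atLeast0LessThan)
  finally have "det (P * M) = 1 + (\<Sum>i<k. W $$ (i,0) * W $$ (i,0))" .
  then have "det M = 1 + (\<Sum>i<k. W $$ (i,0) * W $$ (i,0))"
    using det_mult[OF PC MC] detP by simp
  with d1 show ?thesis by simp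
qed

definition Zm :: "nat \<Rightarrow> rat mat" where "Zm k = mat k 1 (\<lambda>(i,_). zz i)"

lemma Xm_fact:
  assumes "k mod 3 = 1"
  shows "(Xm k)\<^sup>T = trid k * (1\<^sub>m k + Zm k * (Zm k)\<^sup>T)"
proof (rule eq_matI)
  fix i j assume "i < dim_row (trid k * (1\<^sub>m k + Zm k * (Zm k)\<^sup>T))" "j < dim_col (trid k * (1\<^sub>m k + Zm k * (Zm k)\<^sup>T))"
  then have i: "i < k" and j: "j < k" by (auto simp: Zm_def)
  have "(trid k * (1\<^sub>m k + Zm k * (Zm k)\<^sup>T)) $$ (i,j) = (\<Sum>c<k. trid k $$ (i,c) * (1\<^sub>m k + Zm k * (Zm k)\<^sup>T) $$ (c,j))"
    using i j by (intro mult_entry[of _ k k _ k]) (auto simp: Zm_def)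
  also have "\<dots> = (\<Sum>c<k. trid k $$ (i,c) * ((if c = j then 1 else 0) + zz c * zz j))"
    using j by (intro sum.cong refl) (auto simp: Zm_def scalar_prod_def)
  also have "\<dots> = (\<Sum>c<k. (if c = j then trid k $$ (i,c) else 0)) + zz j * (\<Sum>c<k. trid k $$ (i,c) * zz c)"
  proof -
    have "(\<Sum>c<k. trid k $$ (i,c) * ((if c = j then 1 else 0) + zz c * zz j)) =
      (\<Sum>c<k. (if c = j then trid k $$ (i,c) else 0) + zz j * (trid k $$ (i,c) * zz c))"
      by (intro sum.cong refl) (simp add: distrib_left)
    also have "\<dots> = (\<Sum>c<k. (if c = j then trid k $$ (i,c) else 0)) + zz j * (\<Sum>c<k. trid k $$ (i,c) * zz c)"
      by (simp add: sum.distrib sum_distrib_left)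
    finally show ?thesis .
  qed
  also have "(\<Sum>c<k. trid k $$ (i,c) * zz c) = (if i = k - 1 then -1 else 0)"
    using trid_sum[OF i, of zz] zz_trid2[OF i assms] by simp
  also have "(\<Sum>c<k. (if c = j then trid k $$ (i,c) else 0)) = trid k $$ (i,j)"
    using j by (simp add: sum.delta')
  finally show "(Xm k)\<^sup>T $$ (i,j) = (trid k * (1\<^sub>m k + Zm k * (Zm k)\<^sup>T)) $$ (i,j)"
    using i j by (auto simp: Xm_def trid_sym)
qed (auto simp: Xm_def Zm_def)

lemma sum_zz: "(\<Sum>i<3 * q + 1. zz i * zz i) = 2 * of_nat q + 1"
proof (induction q)
  case 0 then show ?case by (simp add: zz_def)
next
  case (Suc q)
  have e: "3 * Suc q + 1 = Suc (Suc (Suc (3 * q + 1)))" by simp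
  have "(3 * q + 1) mod 3 = 1" "(Suc (3 * q + 1)) mod 3 = 2" "(Suc (Suc (3 * q + 1))) mod 3 = 0"
    by presburger+
  then show ?case unfolding e using Suc by (simp add: zz_def)
qed

lemma det_Xm:
  assumes "k = 3 * q + 1"
  shows "det (Xm k) = det (trid k) * (2 * of_nat q + 2)"
proof -
  have km: "k mod 3 = 1" using assms by simp
  have "det (Xm k) = det ((Xm k)\<^sup>T)" by (rule det_transpose[symmetric, of _ k]) simp
  also have "\<dots> = det (trid k) * det (1\<^sub>m k + Zm k * (Zm k)\<^sup>T)"
    unfolding Xm_fact[OF km] by (rule det_mult[of _ k]) (auto simp: Zm_def)
  also have "det (1\<^sub>m k + Zm k * (Zm k)\<^sup>T) = 1 + (\<Sum>i<k. Zm k $$ (i,0) * Zm k $$ (i,0))"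
    by (rule det_rank_one) (simp add: Zm_def)
  also have "(\<Sum>i<k. Zm k $$ (i,0) * Zm k $$ (i,0)) = (\<Sum>i<k. zz i * zz i)"
    by (intro sum.cong) (auto simp: Zm_def)
  also have "\<dots> = 2 * of_nat q + 1" unfolding assms by (rule sum_zz)
  finally show ?thesis by simp
qed

lemma trid_rec: "det (trid (Suc (Suc j))) = det (trid (Suc j)) - det (trid j)"
proof -
  let ?T = "trid (Suc (Suc j))"
  define N where "N = mat_delete ?T (Suc j) j"
  have d1: "mat_delete ?T (Suc j) (Suc j) = trid (Suc j)"
    by (rule eq_matI) (auto simp: mat_delete_def trid_def)
  have NC: "N \<in> carrier_mat (Suc j) (Suc j)" unfolding N_def using mat_delete_carrier[OF trid_carrier, of "Suc (Suc j)" "Suc j" j] by simp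
  have d2: "mat_delete N j j = trid j"
    by (rule eq_matI) (auto simp: N_def mat_delete_def trid_def)
  have Nj: "i < Suc j \<Longrightarrow> N $$ (i,j) = (if i = j then 1 else 0)" for i
    by (auto simp: N_def mat_delete_def trid_def)
  have "det N = (\<Sum>i<Suc j. N $$ (i,j) * cofactor N i j)"
    by (rule laplace_expansion_column[OF NC]) simp
  also have "\<dots> = (\<Sum>i<Suc j. if i = j then cofactor N i j else 0)"
    by (intro sum.cong refl) (simp add: Nj)
  also have "\<dots> = cofactor N j j" by (simp add: sum.delta')
  also have "\<dots> = det (trid j)" by (simp add: cofactor_def d2)
  finally have dN: "det N = det (trid j)" .
  have "det ?T = (\<Sum>c<Suc (Suc j). ?T $$ (Suc j,c) * cofactor ?T (Suc j) c)"
    by (rule laplace_expansion_row) auto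
  also have "\<dots> = (\<Sum>c<j. ?T $$ (Suc j,c) * cofactor ?T (Suc j) c) + cofactor ?T (Suc j) j + cofactor ?T (Suc j) (Suc j)"
    by (simp add: trid_def)
  also have "(\<Sum>c<j. ?T $$ (Suc j,c) * cofactor ?T (Suc j) c) = 0"
    by (intro sum.neutral) (auto simp: trid_def)
  also have "cofactor ?T (Suc j) j = - det (trid j)"
    using dN by (simp add: cofactor_def N_def)
  also have "cofactor ?T (Suc j) (Suc j) = det (trid (Suc j))"
    by (simp add: cofactor_def d1)
  finally show ?thesis by simp
qed

lemma trid_vals: "det (trid (3 * q)) = (-1) ^ q \<and> det (trid (3 * q + 1)) = (-1) ^ q \<and> det (trid (3 * q + 2)) = 0"
proof (induction q)
  case 0
  have t0: "det (trid 0) = 1" by (rule det_dim_zero) simp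
  have t1: "det (trid 1) = 1" by (subst det_single) (auto simp: trid_def)
  have "det (trid 2) = det (trid 1) - det (trid 0)" using trid_rec[of 0] by (simp add: numeral_2_eq_2)
  then show ?case using t0 t1 by (simp add: numeral_2_eq_2)
next
  case (Suc q)
  have e1: "3 * Suc q = Suc (Suc (3 * q + 1))" and e2: "3 * q + 2 = Suc (3 * q + 1)"
    and e3: "3 * Suc q + 1 = Suc (Suc (3 * q + 2))" and e4: "3 * Suc q = Suc (3 * q + 2)"
    and e5: "3 * Suc q + 2 = Suc (Suc (3 * Suc q))" and e6: "3 * Suc q + 1 = Suc (3 * Suc q)" by simp_all
  have a: "det (trid (3 * Suc q)) = det (trid (3 * q + 2)) - det (trid (3 * q + 1))"
    by (subst e1, subst e2, rule trid_rec)
  have b: "det (trid (3 * Suc q + 1)) = det (trid (3 * Suc q)) - det (trid (3 * q + 2))"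
    by (subst e3, subst e4, rule trid_rec)
  have c: "det (trid (3 * Suc q + 2)) = det (trid (3 * Suc q + 1)) - det (trid (3 * Suc q))"
    by (subst e5, subst e6, rule trid_rec)
  show ?case using a b c Suc by simp
qed

theorem theorem54:
  fixes n k :: nat
  assumes "n > 0" and "k > 0" and "k mod 3 = 1"
  shows "det (mat k k (\<lambda>(i, j). of_nat (motzkin_bounded k (n + i + j)) :: rat))
         = (-1) ^ (n * ((k + 1) div 3)) * ((2 * of_nat k + 4) / 3) ^ (n - 1)"
proof -
  obtain q where k: "k = 3 * q + 1" using assms(3) by (metis div_mod_decomp mult.commute)
  obtain n' where n: "n = Suc n'" using assms(1) by (cases n) auto
  have dB: "det (trid k) = (-1) ^ q" using trid_vals[of q] k by simp
  have "det (mat k k (\<lambda>(i, j). of_nat (motzkin_bounded k (n + i + j)) :: rat)) = det (Lm k (Suc n'))"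
    unfolding n by (rule det_hankel)
  also have "\<dots> = det (trid k) * det (Xm k) ^ n'" by (rule det_L[OF assms(3)])
  also have "\<dots> = (-1) ^ q * ((-1) ^ q * (2 * of_nat q + 2)) ^ n'"
    unfolding det_Xm[OF k] dB ..
  also have "\<dots> = (-1) ^ (n * q) * (2 * of_nat q + 2) ^ n'"
    by (simp add: n power_mult_distrib power_add power_mult[symmetric] mult.commute)
  finally have r: "det (mat k k (\<lambda>(i, j). of_nat (motzkin_bounded k (n + i + j)) :: rat)) = (-1) ^ (n * q) * (2 * of_nat q + 2) ^ n'" .
  have e1: "(k + 1) div 3 = q" using k by simp
  have e2: "(2 * of_nat k + 4) / 3 = (2 * of_nat q + 2 :: rat)" using k by simp
  show ?thesis unfolding r e1 e2 using n by simp
qed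

end
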